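(* Let $q>1$ and let $\rho$ be a positive $2\pi$-periodic $C^2$ function with $(\ln\rho)''(t)<\sqrt{q}/(1+\sqrt{q})$ for all $t$. Let $\rho_n=\ln\rho$, $\theta_q=\arccos(1/\sqrt{q})\in(0,\pi/2)$ and $h(\theta)=\dfrac{\sqrt{q}\sin\theta}{\sqrt{q}\cos\theta+1}$. Then for each $\eta\in\mathbb{S}^1$ and each $l\in\{1,2\}$, with $\eta_l=(-1)^{l-1}\eta$, the equation $$\rho_n'(\theta)=h(\theta-\theta_{\eta_l}),\qquad \theta\in\mathbb{R}/(2\pi\mathbb{Z}),$$ has exactly two solutions $\mathcal{T}_{1,l}\eta$ and $\mathcal{T}_{2,l}\eta$, which satisfy $\mathcal{T}_{1,l}\eta-\theta_{\eta_l}\in(\theta_q-\pi,\pi-\theta_q)$ and $\mathcal{T}_{2,l}\eta-\theta_{\eta_l}\in(\pi-\theta_q,\theta_q+\pi)$ (modulo $2\pi$).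
   Context: We identify $\mathbb{S}^1$ with $\mathbb{R}/(2\pi\mathbb{Z})$ via $\theta\mapsto(\cos\theta,\sin\theta)^T$; $\theta_\eta$ denotes the angular coordinate of $\eta\in\mathbb{S}^1$. The function $h$ has poles exactly where $\cos\theta=-1/\sqrt{q}$, i.e. at $\theta=\pm(\pi-\theta_q)$ mod $2\pi$. *)

theory Defs
  imports "HOL-Analysis.Analysis"
begin

definition theta_q :: "real \<Rightarrow> real" where
  "theta_q q = arccos (1 / sqrt q)"

definition hfun :: "real \<Rightarrow> real \<Rightarrow> real" where
  "hfun q \<theta> = sqrt q * sin \<theta> / (sqrt q * cos \<theta> + 1)"

definition is_sol :: "real \<Rightarrow> (real \<Rightarrow> real) \<Rightarrow> real \<Rightarrow> real \<Rightarrow> bool" where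
  "is_sol q \<rho> \<phi> \<theta> \<longleftrightarrow>
     sqrt q * cos (\<theta> - \<phi>) + 1 \<noteq> 0 \<and>
     deriv (\<lambda>s. ln (\<rho> s)) \<theta> = hfun q (\<theta> - \<phi>)"

definition cong_2pi :: "real \<Rightarrow> real \<Rightarrow> bool" where
  "cong_2pi x y \<longleftrightarrow> (\<exists>k::int. x = y + 2 * pi * of_int k)"

end

theory Submission imports Defs begin

lemma h_deriv:
  fixes a x :: real
  assumes "a * cos x + 1 \<noteq> 0"
  shows "((\<lambda>x. a * sin x / (a * cos x + 1)) has_real_derivative (a*a + a * cos x)/(a* cos x+1)^2) (at x)"
proof -
  have "((\<lambda>x. a * sin x / (a * cos x + 1)) has_real_derivative ((a * cos x)*(a* cos x+1) - (a * sin x) * (- (a * sin x)))/((a* cos x+1)*(a* cos x+1))) (at x)"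
    by (auto intro!: derivative_eq_intros simp: assms)
  moreover have ss: "sin x * sin x = 1 - cos x * cos x"
    using sin_squared_eq[of x] by (simp add: power2_eq_square)
  moreover have "((a * cos x)*(a* cos x+1) - (a * sin x) * (- (a * sin x))) = a*a + a* cos x"
    by (simp add: algebra_simps ss)
  ultimately show ?thesis by (simp add: power2_eq_square)
qed

lemma h_bound:
  fixes a x :: real
  assumes "a > 1" "-1 \<le> x" "x \<le> 1" "a * x + 1 \<noteq> 0"
  shows "a/(1+a) \<le> (a*a + a*x)/(a*x+1)^2"
proof -
  have "0 \<le> (1-x)*(1+x)" using assms by simp
  then have "x*x \<le> 1" by (simp add: algebra_simps)
  then have "0 \<le> a*(a*a*(1-x*x) + (a-1)*(1-x))"
    using assms by (intro mult_nonneg_nonneg add_nonneg_nonneg) auto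
  moreover have "a*(a*a*(1-x*x) + (a-1)*(1-x)) = (a*a+a*x)*(1+a) - a*(a*x+1)^2"
    by (simp add: algebra_simps power2_eq_square)
  ultimately have "a*(a*x+1)^2 \<le> (a*a+a*x)*(1+a)" by linarith
  moreover have "(a*x+1)^2 > 0" using assms by simp
  ultimately show ?thesis using assms by (simp add: divide_simps mult.commute)
qed

lemma unique_zero:
  fixes f :: "real \<Rightarrow> real"
  assumes d: "\<And>x. l < x \<Longrightarrow> x < u \<Longrightarrow> \<exists>y. DERIV f x :> y \<and> y > 0"
    and x: "l < x" "x < u" and y: "l < y" "y < u" and "f x = 0" "f y = 0"
  shows "x = y"
proof (rule ccontr)
  have *: "f s < f t" if lst: "l < s" "s < t" "t < u" for s t
  proof (rule DERIV_pos_imp_increasing_open[OF \<open>s<t\<close>])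
    show "\<And>z. s < z \<Longrightarrow> z < t \<Longrightarrow> \<exists>y. DERIV f z :> y \<and> 0 < y" using d lst by force
    show "continuous_on {s..t} f"
      proof (rule continuous_at_imp_continuous_on, intro ballI)
      fix z assume "z \<in> {s..t}"
      then have "l < z" "z < u" using lst by auto
      then obtain y where "DERIV f z :> y" using d by blast
      then show "isCont f z" by (rule DERIV_isCont)
    qed
  qed
  assume "x \<noteq> y"
  then consider "x < y" | "y < x" by linarith
  then show False using *[of x y] *[of y x] assms by cases auto
qed

lemma exists_zero:
  fixes f :: "real \<Rightarrow> real"
  assumes d: "\<And>x. l < x \<Longrightarrow> x < u \<Longrightarrow> \<exists>y. DERIV f x :> y"
    and "l < x1" "x1 < x2" "x2 < u" "f x1 < 0" "0 < f x2"
  shows "\<exists>x. l < x \<and> x < u \<and> f x = 0"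
proof -
  have "continuous_on {x1..x2} f"
  proof (rule continuous_at_imp_continuous_on, intro ballI)
    fix z assume "z \<in> {x1..x2}"
    then obtain y where "DERIV f z :> y" using d assms by force
    then show "isCont f z" by (rule DERIV_isCont)
  qed
  then obtain x where "x1 \<le> x" "x \<le> x2" "f x = 0"
    using IVT'[of f x1 0 x2] assms by force
  then show ?thesis using assms by (intro exI[of _ x]) auto
qed

lemma per_int:
  fixes G :: "real \<Rightarrow> real"
  assumes "\<And>t. G (t + p) = G t"
  shows "G (t + p * of_int k) = G t"
proof -
  have n: "G (t + p * of_nat n) = G t" for n t
  proof (induction n arbitrary: t)
    case (Suc n)
    have "G (t + p * of_nat (Suc n)) = G ((t + p * of_nat n) + p)" by (simp add: algebra_simps)
    then show ?case using assms Suc by simp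
  qed simp
  show ?thesis
  proof (cases "k \<ge> 0")
    case True
    then show ?thesis using n[of t "nat k"] by simp
  next
    case False
    then have "G ((t + p * of_int k) + p * of_nat (nat (-k))) = G (t + p * of_int k)" using n by blast
    then show ?thesis using False by simp
  qed
qed

lemma periodic_bounded:
  fixes G :: "real \<Rightarrow> real"
  assumes "\<And>t. G (t + 2*pi) = G t" "continuous_on UNIV G"
  shows "\<exists>M. \<forall>t. \<bar>G t\<bar> \<le> M"
proof -
  have "compact (G ` {0..2*pi})"
    by (rule compact_continuous_image) (use assms(2) continuous_on_subset in auto)
  then obtain B where B: "\<forall>x\<in>G ` {0..2*pi}. norm x \<le> B"
    using compact_imp_bounded bounded_iff by metis
  have "\<bar>G t\<bar> \<le> B" for t
  proof -
    define k where "k = \<lfloor>t / (2*pi)\<rfloor>"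
    have "of_int k \<le> t/(2*pi)" "t/(2*pi) < of_int k + 1" unfolding k_def by linarith+
    then have "2*pi* of_int k \<le> t" "t < 2*pi* of_int k + 2*pi"
      by (simp_all add: field_simps)
    then have "t - 2*pi* of_int k \<in> {0..2*pi}" by auto
    moreover have "G ((t - 2*pi* of_int k) + 2*pi * of_int k) = G (t - 2*pi* of_int k)"
      by (rule per_int) (rule assms(1))
    ultimately show ?thesis using B by auto
  qed
  then show ?thesis by blast
qed

theorem lemma4:
  fixes q :: real and \<rho> \<rho>' \<rho>'' :: "real \<Rightarrow> real"
    and \<eta> :: complex and l :: nat and \<phi> :: real
  assumes q: "q > 1"
    and pos: "\<forall>t. \<rho> t > 0"
    and per: "\<forall>t. \<rho> (t + 2 * pi) = \<rho> t"
    and d1: "\<forall>t. (\<rho> has_real_derivative \<rho>' t) (at t)"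
    and d2: "\<forall>t. (\<rho>' has_real_derivative \<rho>'' t) (at t)"
    and c2: "continuous_on UNIV \<rho>''"
    and conv: "\<forall>t. deriv (deriv (\<lambda>s. ln (\<rho> s))) t < sqrt q / (1 + sqrt q)"
    and eta: "cmod \<eta> = 1"
    and l: "l \<in> {1, 2}"
    and phi: "cis \<phi> = (-1) ^ (l - 1) * \<eta>"
  shows "\<exists>T1 T2.
           is_sol q \<rho> \<phi> T1 \<and> is_sol q \<rho> \<phi> T2 \<and>
           T1 - \<phi> \<in> {theta_q q - pi <..< pi - theta_q q} \<and>
           T2 - \<phi> \<in> {pi - theta_q q <..< theta_q q + pi} \<and>
           (\<forall>\<theta>. is_sol q \<rho> \<phi> \<theta> \<longrightarrow> cong_2pi \<theta> T1 \<or> cong_2pi \<theta> T2)"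
proof -
  define a where "a = sqrt q"
  have a1: "a > 1" using q unfolding a_def by simp
  define G where "G t = \<rho>' t / \<rho> t" for t
  define D where "D t = (\<rho>'' t * \<rho> t - \<rho>' t * \<rho>' t) / (\<rho> t * \<rho> t)" for t
  have dlog: "((\<lambda>s. ln (\<rho> s)) has_real_derivative G t) (at t)" for t
    using pos d1 unfolding G_def by (auto intro!: derivative_eq_intros)
  have derivlog: "deriv (\<lambda>s. ln (\<rho> s)) = G"
    using dlog DERIV_imp_deriv by blast
  have dG: "(G has_real_derivative D t) (at t)" for t
  proof -
    have "((\<lambda>t. \<rho>' t / \<rho> t) has_real_derivative D t) (at t)"
      proof -
      have "\<rho> t \<noteq> 0" using pos by (metis less_irrefl)
      then show ?thesis unfolding D_def using d1 d2 by (auto intro!: derivative_eq_intros simp: power2_eq_square)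
    qed
    then show ?thesis unfolding G_def[abs_def] .
  qed
  have Dlt: "D t < a / (1 + a)" for t
    using conv[rule_format, of t] derivlog DERIV_imp_deriv[OF dG] unfolding a_def by simp
  have contG: "continuous_on UNIV G"
    using dG by (meson DERIV_isCont continuous_at_imp_continuous_on)
  have per': "\<rho>' (t + 2*pi) = \<rho>' t" for t
  proof -
    have "((\<lambda>x. \<rho> (x + 2*pi)) has_real_derivative \<rho>' (t + 2*pi)) (at t)"
      using d1 DERIV_shift by blast
    moreover have "(\<lambda>x. \<rho> (x + 2*pi)) = \<rho>" using per by auto
    ultimately show ?thesis using d1 DERIV_unique by metis
  qed
  have Gper: "G (t + 2*pi) = G t" for t unfolding G_def using per per' by simp
  obtain M where M: "\<And>t. \<bar>G t\<bar> \<le> M" using periodic_bounded[OF Gper contG] by blast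
  define H where "H x = a * sin x / (a * cos x + 1)" for x
  define F where "F x = H x - G (x + \<phi>)" for x
  have sol_iff: "is_sol q \<rho> \<phi> \<theta> \<longleftrightarrow> a * cos (\<theta> - \<phi>) + 1 \<noteq> 0 \<and> F (\<theta> - \<phi>) = 0" for \<theta>
    unfolding is_sol_def derivlog F_def H_def hfun_def a_def by auto
  have dF: "\<exists>y. DERIV F x :> y \<and> y > 0" if "a * cos x + 1 \<noteq> 0" for x
  proof -
    have "DERIV F x :> ((a*a + a * cos x)/(a * cos x+1)^2 - D (x + \<phi>))"
      unfolding F_def[abs_def] H_def[abs_def]
      using DERIV_diff[OF h_deriv[OF that] iffD1[OF DERIV_shift[of G "D (x+\<phi>)" x \<phi>] dG[of "x + \<phi>"]]]
      by simp
    moreover have "a/(1+a) \<le> (a*a + a * cos x)/(a * cos x+1)^2"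
      by (rule h_bound) (use a1 that in auto)
    ultimately show ?thesis using Dlt[of "x+\<phi>"] by (intro exI) auto
  qed
  define tq where "tq = theta_q q"
  have ia: "0 < 1/a" "1/a < 1" using a1 by auto
  have tq: "0 < tq" "tq < pi" "cos tq = 1/a"
  proof -
    have c: "cos (arccos (1/a)) = 1/a" using ia by (intro cos_arccos) linarith+
    have e: "tq = arccos (1/a)" unfolding tq_def theta_q_def a_def ..
    show "cos tq = 1/a" using c e by simp
    show "0 < tq" "tq < pi" using e arccos_lt_bounded[of "1/a"] ia by auto
  qed
  have stq: "sin tq > 0" using tq by (intro sin_gt_zero) auto
  have C1: "a * cos x + 1 > 0" if "tq - pi < x" "x < pi - tq" for x
  proof -
    have "cos (pi - tq) < cos \<bar>x\<bar>" by (rule cos_monotone_0_pi) (use that tq in auto)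
    then have "-1/a < cos x" using tq by simp
    then show ?thesis using a1 by (simp add: field_simps)
  qed
  have C2: "a * cos x + 1 < 0" if "pi - tq < x" "x < pi + tq" for x
  proof -
    have "cos tq < cos \<bar>x - pi\<bar>" by (rule cos_monotone_0_pi) (use that tq in auto)
    then have "1/a < - cos x" using tq by (simp add: cos_diff)
    then show ?thesis using a1 by (simp add: field_simps)
  qed
  have C3: "a * cos (tq - pi) + 1 = 0" "a * cos (pi - tq) + 1 = 0"
    using tq a1 by (simp_all add: cos_diff)
  have Hneg: "H (- x) = - H x" for x unfolding H_def by simp
  have H2pi: "H (2*pi - x) = - H x" for x unfolding H_def by (simp add: sin_diff cos_diff)
  obtain x2 where x2: "0 < x2" "x2 < pi - tq" "H x2 > M"
  proof -
    have "LIM x at_left (pi - tq). H x :> at_top"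
      unfolding H_def
    proof (rule LIM_at_top_divide)
      show "((\<lambda>x. a * sin x) \<longlongrightarrow> a * sin (pi - tq)) (at_left (pi - tq))" by (intro tendsto_intros)
      show "0 < a * sin (pi - tq)" using a1 stq by simp
      have "((\<lambda>x. a * cos x + 1) \<longlongrightarrow> a * cos (pi - tq) + 1) (at_left (pi - tq))" by (intro tendsto_intros)
      then show "((\<lambda>x. a * cos x + 1) \<longlongrightarrow> 0) (at_left (pi - tq))" using C3 by simp
      show "eventually (\<lambda>x. 0 < a * cos x + 1) (at_left (pi - tq))"
      proof -
        have "eventually (\<lambda>x. x \<in> {0<..<pi - tq}) (at_left (pi - tq))"
          using eventually_at_left_real[of 0 "pi - tq"] tq by simp
        then show ?thesis by (rule eventually_mono) (use tq in \<open>auto intro!: C1\<close>)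
      qed
    qed
    then have "eventually (\<lambda>x. M < H x) (at_left (pi - tq))" by (simp add: filterlim_at_top_dense)
    moreover have "eventually (\<lambda>x. x \<in> {0<..<pi - tq}) (at_left (pi - tq))"
      using eventually_at_left_real[of 0 "pi - tq"] tq by simp
    ultimately have "eventually (\<lambda>x. M < H x \<and> x \<in> {0<..<pi - tq}) (at_left (pi - tq))"
      by (rule eventually_conj)
    then obtain x where "M < H x \<and> x \<in> {0<..<pi - tq}"
      using eventually_happens'[OF trivial_limit_at_left_real] by blast
    then show ?thesis using that by auto
  qed
  obtain y1 where y1: "pi - tq < y1" "y1 < pi" "H y1 < - M"
  proof -
    have "LIM x at_right (pi - tq). a * sin x / (- (a * cos x + 1)) :> at_top"
    proof (rule LIM_at_top_divide)
      show "((\<lambda>x. a * sin x) \<longlongrightarrow> a * sin (pi - tq)) (at_right (pi - tq))" by (intro tendsto_intros)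
      show "0 < a * sin (pi - tq)" using a1 stq by simp
      have "((\<lambda>x. - (a * cos x + 1)) \<longlongrightarrow> - (a * cos (pi - tq) + 1)) (at_right (pi - tq))" by (intro tendsto_intros)
      then show "((\<lambda>x. - (a * cos x + 1)) \<longlongrightarrow> 0) (at_right (pi - tq))" using C3 by simp
      show "eventually (\<lambda>x. 0 < - (a * cos x + 1)) (at_right (pi - tq))"
      proof -
        have "eventually (\<lambda>x. x \<in> {pi - tq<..<pi}) (at_right (pi - tq))"
          using eventually_at_right_real[of "pi - tq" pi] tq by simp
        then show ?thesis by (rule eventually_mono) (use tq C2 in force)
      qed
    qed
    then have "eventually (\<lambda>x. M < a * sin x / (- (a * cos x + 1))) (at_right (pi - tq))" by (simp add: filterlim_at_top_dense)
    moreover have "eventually (\<lambda>x. x \<in> {pi - tq<..<pi}) (at_right (pi - tq))"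
      using eventually_at_right_real[of "pi - tq" pi] tq by simp
    ultimately have "eventually (\<lambda>x. M < a * sin x / (- (a * cos x + 1)) \<and> x \<in> {pi - tq<..<pi}) (at_right (pi - tq))"
      by (rule eventually_conj)
    then obtain x where "M < a * sin x / (- (a * cos x + 1)) \<and> x \<in> {pi - tq<..<pi}"
      using eventually_happens'[OF trivial_limit_at_right_real] by blast
    moreover have "H x = - (a * sin x / (- (a * cos x + 1)))" unfolding H_def
      by (metis divide_minus_right minus_minus)
    ultimately show ?thesis using that by auto
  qed
  have GM: "- M \<le> G t" "G t \<le> M" for t using M[of t] by auto
  have dF1: "\<exists>y. DERIV F x :> y \<and> y > 0" if "tq - pi < x" "x < pi - tq" for x
    using dF C1[OF that] by auto
  have dF2: "\<exists>y. DERIV F x :> y \<and> y > 0" if "pi - tq < x" "x < pi + tq" for x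
    using dF C2[OF that] by auto
  obtain \<psi>1 where p1: "tq - pi < \<psi>1" "\<psi>1 < pi - tq" "F \<psi>1 = 0"
  proof -
    have "F (- x2) < 0" "0 < F x2" unfolding F_def using x2 Hneg[of x2] GM[of "- x2 + \<phi>"] GM[of "x2 + \<phi>"] by auto
    then show ?thesis using exists_zero[of "tq - pi" "pi - tq" F "- x2" x2] dF1 x2 that by auto
  qed
  obtain \<psi>2 where p2: "pi - tq < \<psi>2" "\<psi>2 < pi + tq" "F \<psi>2 = 0"
  proof -
    have "F y1 < 0" "0 < F (2*pi - y1)" unfolding F_def using y1 H2pi[of y1] GM[of "y1 + \<phi>"] GM[of "2*pi - y1 + \<phi>"] by auto
    then show ?thesis using exists_zero[of "pi - tq" "pi + tq" F y1 "2*pi - y1"] dF2 y1 tq that by auto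
  qed
  show ?thesis
  proof (intro exI conjI allI impI)
    show "is_sol q \<rho> \<phi> (\<psi>1 + \<phi>)" unfolding sol_iff using p1 C1[of \<psi>1] by auto
    show "is_sol q \<rho> \<phi> (\<psi>2 + \<phi>)" unfolding sol_iff using p2 C2[of \<psi>2] by auto
    show "\<psi>1 + \<phi> - \<phi> \<in> {theta_q q - pi<..<pi - theta_q q}" using p1 tq_def by auto
    show "\<psi>2 + \<phi> - \<phi> \<in> {pi - theta_q q<..<theta_q q + pi}" using p2 tq_def by auto
    fix \<theta> assume "is_sol q \<rho> \<phi> \<theta>"
    then have ne: "a * cos (\<theta> - \<phi>) + 1 \<noteq> 0" and F0: "F (\<theta> - \<phi>) = 0" unfolding sol_iff by auto
    define \<psi> where "\<psi> = \<theta> - \<phi>"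
    define k where "k = \<lfloor>(\<psi> - (tq - pi)) / (2*pi)\<rfloor>"
    define \<psi>' where "\<psi>' = \<psi> - 2*pi * of_int k"
    have "of_int k \<le> (\<psi> - (tq - pi)) / (2*pi)" "(\<psi> - (tq - pi)) / (2*pi) < of_int k + 1"
      unfolding k_def by linarith+
    then have r: "tq - pi \<le> \<psi>'" "\<psi>' < tq + pi" unfolding \<psi>'_def by (simp_all add: field_simps)
    have cs: "cos \<psi>' = cos \<psi>" "sin \<psi>' = sin \<psi>" unfolding \<psi>'_def by (simp_all add: cos_diff sin_diff)
    have "G ((\<psi>' + \<phi>) + 2*pi * of_int k) = G (\<psi>' + \<phi>)" by (rule per_int) (rule Gper)
    then have "G (\<psi>' + \<phi>) = G (\<psi> + \<phi>)" unfolding \<psi>'_def by simp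
    then have F0': "F \<psi>' = 0" and ne': "a * cos \<psi>' + 1 \<noteq> 0"
      using F0 ne cs unfolding F_def H_def \<psi>_def by auto
    have "\<psi>' \<noteq> tq - pi" "\<psi>' \<noteq> pi - tq" using ne' C3 by auto
    then consider "tq - pi < \<psi>'" "\<psi>' < pi - tq" | "pi - tq < \<psi>'" "\<psi>' < pi + tq" using r by linarith
    then show "cong_2pi \<theta> (\<psi>1 + \<phi>) \<or> cong_2pi \<theta> (\<psi>2 + \<phi>)"
    proof cases
      case 1
      then have "\<psi>' = \<psi>1" using unique_zero[of "tq - pi" "pi - tq" F] dF1 p1 F0' by blast
      then have "cong_2pi \<theta> (\<psi>1 + \<phi>)" unfolding cong_2pi_def \<psi>'_def \<psi>_def by (intro exI[of _ k]) auto
      then show ?thesis ..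
    next
      case 2
      then have "\<psi>' = \<psi>2" using unique_zero[of "pi - tq" "pi + tq" F] dF2 p2 F0' by blast
      then have "cong_2pi \<theta> (\<psi>2 + \<phi>)" unfolding cong_2pi_def \<psi>'_def \<psi>_def by (intro exI[of _ k]) auto
      then show ?thesis ..
    qed
  qed
qed
end
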